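(* Let $n\ge 3$ and $J=(x_n+y_n)+I_{n-2}\subseteq R$. Then $J:x_n=\mathfrak p^{+}$.
   Context: Let $\Bbbk$ be a field and $R=\Bbbk[x_1,\dots,x_n,y_1,\dots,y_n]$. For $1\le i<j\le n$ put $f_{ij}=x_iy_j-x_jy_i$ and $g_{ij}=x_ix_j-y_iy_j$. Let $\mathcal I_{K_n}=(g_{ij}\mid 1\le i<j\le n)$. Define $I_0=\mathcal I_{K_n}$ and inductively $I_k=I_{k-1}+(f_{kn})$ for $1\le k\le n-1$. Let $\mathfrak p^{+}=(x_i+y_i\mid i\in[n])$. *)

theory Defs
  imports "HOL-Library.Poly_Mapping"
begin

datatype var = X nat | Y nat

type_synonym 'k mpoly = "(var \<Rightarrow>\<^sub>0 nat) \<Rightarrow>\<^sub>0 'k"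

definition Var :: "var \<Rightarrow> 'k::field mpoly" where
  "Var v = Poly_Mapping.single (Poly_Mapping.single v 1) 1"

abbreviation xv :: "nat \<Rightarrow> 'k::field mpoly" where "xv i \<equiv> Var (X i)"
abbreviation yv :: "nat \<Rightarrow> 'k::field mpoly" where "yv i \<equiv> Var (Y i)"

definition vars :: "'k::field mpoly \<Rightarrow> var set" where
  "vars p = \<Union> (Poly_Mapping.keys ` Poly_Mapping.keys p)"

definition varset :: "nat \<Rightarrow> var set" where
  "varset n = {X i | i. 1 \<le> i \<and> i \<le> n} \<union> {Y i | i. 1 \<le> i \<and> i \<le> n}"

definition polyring :: "nat \<Rightarrow> 'k::field mpoly set" where
  "polyring n = {p. vars p \<subseteq> varset n}"

definition ideal_gen :: "nat \<Rightarrow> 'k::field mpoly set \<Rightarrow> 'k mpoly set" where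
  "ideal_gen n S = {p. \<exists>F c. finite F \<and> F \<subseteq> S \<and> (\<forall>g\<in>F. c g \<in> polyring n)
                        \<and> p = (\<Sum>g\<in>F. c g * g)}"

definition colon :: "nat \<Rightarrow> 'k::field mpoly set \<Rightarrow> 'k mpoly \<Rightarrow> 'k mpoly set" where
  "colon n J f = {g \<in> polyring n. g * f \<in> J}"

definition fij :: "nat \<Rightarrow> nat \<Rightarrow> 'k::field mpoly" where
  "fij i j = xv i * yv j - xv j * yv i"

definition gij :: "nat \<Rightarrow> nat \<Rightarrow> 'k::field mpoly" where
  "gij i j = xv i * xv j - yv i * yv j"

text \<open>Generators of I_k = I_{K_n} + (f_{1n}, ..., f_{kn}).\<close>
definition I_gens :: "nat \<Rightarrow> nat \<Rightarrow> 'k::field mpoly set" where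
  "I_gens n k = {gij i j | i j. 1 \<le> i \<and> i < j \<and> j \<le> n}
              \<union> {fij l n | l. 1 \<le> l \<and> l \<le> k}"

definition I_k :: "nat \<Rightarrow> nat \<Rightarrow> 'k::field mpoly set" where
  "I_k n k = ideal_gen n (I_gens n k)"

definition p_plus :: "nat \<Rightarrow> 'k::field mpoly set" where
  "p_plus n = ideal_gen n {xv i + yv i | i. 1 \<le> i \<and> i \<le> n}"

end

theory Submission imports Defs begin

abbreviation lk where "lk \<equiv> Poly_Mapping.lookup"
abbreviation ks where "ks \<equiv> Poly_Mapping.keys"
abbreviation sg where "sg \<equiv> Poly_Mapping.single"

lemma poly_expand_superset:
  fixes p :: "'a \<Rightarrow>\<^sub>0 'b::comm_monoid_add"
  assumes "finite S" "ks p \<subseteq> S"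
  shows "p = (\<Sum>k\<in>S. sg k (lk p k))"
proof (rule poly_mapping_eqI)
  fix k'
  have "lk (\<Sum>k\<in>S. sg k (lk p k)) k' = (\<Sum>k\<in>S. (lk p k when k = k'))"
    by (simp add: lookup_sum lookup_single)
  also have "\<dots> = lk p k'"
  proof (cases "k' \<in> S")
    case True
    then have "(\<Sum>k\<in>S. (lk p k when k = k')) = (\<Sum>k\<in>{k'}. (lk p k when k = k'))"
      using assms by (intro sum.mono_neutral_right) auto
    then show ?thesis by simp
  next
    case False
    then have "lk p k' = 0" using assms by (auto simp: in_keys_iff)
    then show ?thesis using False by (simp add: when_def, intro sum.neutral) auto
  qed
  finally show "lk p k' = lk (\<Sum>k\<in>S. sg k (lk p k)) k'" by simp
qed

lemma poly_expand:
  fixes p :: "'a \<Rightarrow>\<^sub>0 'b::comm_monoid_add"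
  shows "p = (\<Sum>k\<in>ks p. sg k (lk p k))"
  by (rule poly_expand_superset) auto

definition mon :: "(var \<Rightarrow> 'k::field mpoly) \<Rightarrow> (var \<Rightarrow>\<^sub>0 nat) \<Rightarrow> 'k mpoly" where
  "mon \<sigma> m = (\<Prod>v\<in>ks m. \<sigma> v ^ lk m v)"

definition ev :: "(var \<Rightarrow> 'k::field mpoly) \<Rightarrow> 'k mpoly \<Rightarrow> 'k mpoly" where
  "ev \<sigma> p = (\<Sum>m\<in>ks p. sg 0 (lk p m) * mon \<sigma> m)"

lemma mon_superset:
  assumes "finite S" "ks m \<subseteq> S"
  shows "mon \<sigma> m = (\<Prod>v\<in>S. \<sigma> v ^ lk m v)"
  unfolding mon_def using assms
  by (intro prod.mono_neutral_left) (auto simp: in_keys_iff)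

lemma mon_add: "mon \<sigma> (a + b) = mon \<sigma> a * mon \<sigma> b"
proof -
  let ?S = "ks a \<union> ks b"
  have "mon \<sigma> (a + b) = (\<Prod>v\<in>?S. \<sigma> v ^ lk (a+b) v)"
    by (rule mon_superset) (auto simp: keys_add)
  also have "\<dots> = (\<Prod>v\<in>?S. \<sigma> v ^ lk a v * \<sigma> v ^ lk b v)"
    by (simp add: lookup_add power_add)
  also have "\<dots> = mon \<sigma> a * mon \<sigma> b"
    by (simp add: prod.distrib mon_superset[of ?S a] mon_superset[of ?S b])
  finally show ?thesis .
qed

lemma mon_zero [simp]: "mon \<sigma> 0 = 1"
  by (simp add: mon_def)

lemma ev_superset:
  assumes "finite S" "ks p \<subseteq> S"
  shows "ev \<sigma> p = (\<Sum>m\<in>S. sg 0 (lk p m) * mon \<sigma> m)"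
  unfolding ev_def using assms
  by (intro sum.mono_neutral_left) (auto simp: in_keys_iff)

lemma ev_add: "ev \<sigma> (p + q) = ev \<sigma> p + ev \<sigma> q"
proof -
  let ?S = "ks p \<union> ks q"
  have "ev \<sigma> (p + q) = (\<Sum>m\<in>?S. sg 0 (lk (p+q) m) * mon \<sigma> m)"
    by (rule ev_superset) (auto simp: keys_add)
  also have "\<dots> = (\<Sum>m\<in>?S. sg 0 (lk p m) * mon \<sigma> m + sg 0 (lk q m) * mon \<sigma> m)"
    by (simp add: lookup_add single_add distrib_right)
  also have "\<dots> = ev \<sigma> p + ev \<sigma> q"
    by (simp add: sum.distrib ev_superset[of ?S p] ev_superset[of ?S q])
  finally show ?thesis .
qed

lemma ev_diff: "ev \<sigma> (p - q) = ev \<sigma> p - ev \<sigma> q"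
proof -
  let ?S = "ks p \<union> ks q"
  have "ev \<sigma> (p - q) = (\<Sum>m\<in>?S. sg 0 (lk (p-q) m) * mon \<sigma> m)"
    by (rule ev_superset) (auto simp: keys_diff)
  also have "\<dots> = (\<Sum>m\<in>?S. sg 0 (lk p m) * mon \<sigma> m - sg 0 (lk q m) * mon \<sigma> m)"
    by (simp add: lookup_minus single_diff left_diff_distrib)
  also have "\<dots> = ev \<sigma> p - ev \<sigma> q"
    by (simp add: sum_subtractf ev_superset[of ?S p] ev_superset[of ?S q])
  finally show ?thesis .
qed

lemma ev_zero [simp]: "ev \<sigma> 0 = 0"
  by (simp add: ev_def)

lemma ev_sum: "ev \<sigma> (\<Sum>i\<in>A. f i) = (\<Sum>i\<in>A. ev \<sigma> (f i))"
  by (induction A rule: infinite_finite_induct) (auto simp: ev_add)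

lemma ev_single: "ev \<sigma> (sg a c) = sg 0 c * mon \<sigma> a"
  by (simp add: ev_def)

lemma single0_mult: "sg 0 (a * b) = sg 0 a * (sg 0 b :: 'k::field mpoly)"
  by (simp add: mult_single)

lemma ev_mult: "ev \<sigma> (p * q) = ev \<sigma> p * ev \<sigma> q"
proof -
  have "p * q = (\<Sum>a\<in>ks p. sg a (lk p a)) * (\<Sum>b\<in>ks q. sg b (lk q b))"
    using poly_expand[of p] poly_expand[of q] by simp
  also have "\<dots> = (\<Sum>a\<in>ks p. \<Sum>b\<in>ks q. sg (a+b) (lk p a * lk q b))"
    by (simp add: sum_product mult_single)
  finally have "ev \<sigma> (p * q) = (\<Sum>a\<in>ks p. \<Sum>b\<in>ks q. sg 0 (lk p a * lk q b) * mon \<sigma> (a+b))"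
    by (simp add: ev_sum ev_single)
  also have "\<dots> = (\<Sum>a\<in>ks p. \<Sum>b\<in>ks q. (sg 0 (lk p a) * mon \<sigma> a) * (sg 0 (lk q b) * mon \<sigma> b))"
    by (simp add: single0_mult mon_add ac_simps)
  also have "\<dots> = ev \<sigma> p * ev \<sigma> q"
    by (simp add: ev_def sum_product)
  finally show ?thesis .
qed

lemma ev_Var: "ev \<sigma> (Var v) = \<sigma> v"
  by (simp add: Var_def ev_single mon_def)

lemma ev_const: "ev \<sigma> (sg 0 c) = sg 0 c"
  by (simp add: ev_single)


lemma polyring_iff: "p \<in> polyring n \<longleftrightarrow> (\<forall>m\<in>ks p. ks m \<subseteq> varset n)"
  by (auto simp: polyring_def vars_def)

lemma polyring_zero [simp]: "0 \<in> polyring n"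
  by (simp add: polyring_iff)

lemma polyring_add: "p \<in> polyring n \<Longrightarrow> q \<in> polyring n \<Longrightarrow> p + q \<in> polyring n"
  using keys_add[of p q] by (auto simp: polyring_iff)

lemma polyring_uminus: "p \<in> polyring n \<Longrightarrow> - p \<in> polyring n"
  by (auto simp: polyring_iff)

lemma polyring_diff: "p \<in> polyring n \<Longrightarrow> q \<in> polyring n \<Longrightarrow> p - q \<in> polyring n"
  using keys_diff[of p q] by (auto simp: polyring_iff)

lemma polyring_mult: "p \<in> polyring n \<Longrightarrow> q \<in> polyring n \<Longrightarrow> p * q \<in> polyring n"
proof -
  assume p: "p \<in> polyring n" and q: "q \<in> polyring n"
  show ?thesis unfolding polyring_iff
  proof
    fix m assume "m \<in> ks (p * q)"
    then obtain a b where "a \<in> ks p" "b \<in> ks q" "m = a + b"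
      using keys_mult[of p q] by blast
    moreover have "ks a \<subseteq> varset n" "ks b \<subseteq> varset n"
      using p q \<open>a \<in> ks p\<close> \<open>b \<in> ks q\<close> by (auto simp: polyring_iff)
    ultimately show "ks m \<subseteq> varset n"
      using keys_add[of a b] by blast
  qed
qed

lemma polyring_sum: "(\<And>i. i \<in> A \<Longrightarrow> f i \<in> polyring n) \<Longrightarrow> (\<Sum>i\<in>A. f i) \<in> polyring n"
  by (induction A rule: infinite_finite_induct) (auto intro: polyring_add)

lemma polyring_single: "ks m \<subseteq> varset n \<Longrightarrow> sg m c \<in> polyring n"
  by (auto simp: polyring_iff)

lemma polyring_const: "sg 0 c \<in> polyring n"
  by (rule polyring_single) simp

lemma polyring_one [simp]: "1 \<in> polyring n"
  using polyring_const[where n=n and c=1] by simp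

lemma polyring_Var: "v \<in> varset n \<Longrightarrow> Var v \<in> polyring n"
  unfolding Var_def by (rule polyring_single) simp

lemma polyring_X: "1 \<le> i \<Longrightarrow> i \<le> n \<Longrightarrow> xv i \<in> polyring n"
  by (rule polyring_Var) (auto simp: varset_def)

lemma polyring_Y: "1 \<le> i \<Longrightarrow> i \<le> n \<Longrightarrow> yv i \<in> polyring n"
  by (rule polyring_Var) (auto simp: varset_def)

lemma polyring_power: "p \<in> polyring n \<Longrightarrow> p ^ k \<in> polyring n"
  by (induction k) (auto intro: polyring_mult)

lemma polyring_prod: "(\<And>i. i \<in> A \<Longrightarrow> f i \<in> polyring n) \<Longrightarrow> (\<Prod>i\<in>A. f i) \<in> polyring n"
  by (induction A rule: infinite_finite_induct) (auto intro: polyring_mult)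

lemma ideal_zero: "0 \<in> ideal_gen n S"
  unfolding ideal_gen_def by (rule CollectI, rule exI[of _ "{}"]) auto

lemma ideal_gen_elem: "s \<in> S \<Longrightarrow> c \<in> polyring n \<Longrightarrow> c * s \<in> ideal_gen n S"
  unfolding ideal_gen_def by (rule CollectI, rule exI[of _ "{s}"], rule exI[of _ "\<lambda>_. c"]) auto

lemma ideal_add:
  assumes "p \<in> ideal_gen n S" "q \<in> ideal_gen n S"
  shows "p + q \<in> ideal_gen n S"
proof -
  obtain F1 c1 where 1: "finite F1" "F1 \<subseteq> S" "\<forall>g\<in>F1. c1 g \<in> polyring n" "p = (\<Sum>g\<in>F1. c1 g * g)"
    using assms(1) unfolding ideal_gen_def by blast
  obtain F2 c2 where 2: "finite F2" "F2 \<subseteq> S" "\<forall>g\<in>F2. c2 g \<in> polyring n" "q = (\<Sum>g\<in>F2. c2 g * g)"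
    using assms(2) unfolding ideal_gen_def by blast
  define c where "c g = (if g \<in> F1 then c1 g else 0) + (if g \<in> F2 then c2 g else 0)" for g
  have "(\<Sum>g\<in>F1 \<union> F2. c g * g) = (\<Sum>g\<in>F1 \<union> F2. (if g \<in> F1 then c1 g * g else 0))
      + (\<Sum>g\<in>F1 \<union> F2. (if g \<in> F2 then c2 g * g else 0))"
    unfolding sum.distrib[symmetric] by (rule sum.cong) (auto simp: c_def distrib_right)
  also have "\<dots> = p + q"
    using 1 2 by (simp add: sum.If_cases Int_absorb1 Int_absorb2)
  finally have eq: "p + q = (\<Sum>g\<in>F1 \<union> F2. c g * g)" by simp
  show ?thesis unfolding ideal_gen_def
    apply (rule CollectI, rule exI[of _ "F1 \<union> F2"], rule exI[of _ c])
    using 1 2 eq by (auto simp: c_def intro!: polyring_add)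
qed

lemma ideal_mult:
  assumes "p \<in> ideal_gen n S" "r \<in> polyring n"
  shows "r * p \<in> ideal_gen n S"
proof -
  obtain F1 c1 where 1: "finite F1" "F1 \<subseteq> S" "\<forall>g\<in>F1. c1 g \<in> polyring n" "p = (\<Sum>g\<in>F1. c1 g * g)"
    using assms(1) unfolding ideal_gen_def by blast
  have "r * p = (\<Sum>g\<in>F1. (r * c1 g) * g)"
    using 1 by (simp add: sum_distrib_left mult.assoc)
  then show ?thesis unfolding ideal_gen_def
    apply (intro CollectI exI[of _ F1] exI[of _ "\<lambda>g. r * c1 g"])
    using 1 assms(2) by (auto intro: polyring_mult)
qed

lemma ideal_uminus: "p \<in> ideal_gen n S \<Longrightarrow> - p \<in> ideal_gen n S"
proof -
  assume "p \<in> ideal_gen n S"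
  then have "(-1) * p \<in> ideal_gen n S"
    by (rule ideal_mult) (rule polyring_uminus[OF polyring_one])
  then show ?thesis by simp
qed

lemma ideal_diff: "p \<in> ideal_gen n S \<Longrightarrow> q \<in> ideal_gen n S \<Longrightarrow> p - q \<in> ideal_gen n S"
  using ideal_add[of p n S "-q"] ideal_uminus[of q n S] by simp

lemma ideal_sum: "(\<And>i. i \<in> A \<Longrightarrow> f i \<in> ideal_gen n S) \<Longrightarrow> (\<Sum>i\<in>A. f i) \<in> ideal_gen n S"
  by (induction A rule: infinite_finite_induct) (auto intro: ideal_add ideal_zero)

lemma ideal_subset_polyring: "S \<subseteq> polyring n \<Longrightarrow> ideal_gen n S \<subseteq> polyring n"
  unfolding ideal_gen_def by (auto intro!: polyring_sum polyring_mult)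

lemma ev_ideal:
  assumes "\<And>s. s \<in> S \<Longrightarrow> ev \<sigma> s = 0" "p \<in> ideal_gen n S"
  shows "ev \<sigma> p = 0"
proof -
  obtain F1 c1 where 1: "finite F1" "F1 \<subseteq> S" "\<forall>g\<in>F1. c1 g \<in> polyring n" "p = (\<Sum>g\<in>F1. c1 g * g)"
    using assms(2) unfolding ideal_gen_def by blast
  then show ?thesis using assms(1) by (auto simp: ev_sum ev_mult intro!: sum.neutral)
qed

definition cg where "cg n S p q \<longleftrightarrow> p - q \<in> ideal_gen n S \<and> p \<in> polyring n \<and> q \<in> polyring n"

lemma cg_mult: "cg n S p1 q1 \<Longrightarrow> cg n S p2 q2 \<Longrightarrow> cg n S (p1 * p2) (q1 * q2)"
proof -
  assume 1: "cg n S p1 q1" and 2: "cg n S p2 q2"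
  have "p1 * p2 - q1 * q2 = p1 * (p2 - q2) + q2 * (p1 - q1)"
    by (simp add: algebra_simps)
  then show ?thesis using 1 2 unfolding cg_def
    by (auto intro!: ideal_add ideal_mult polyring_mult)
qed

lemma cg_refl: "p \<in> polyring n \<Longrightarrow> cg n S p p"
  by (simp add: cg_def ideal_zero)

lemma cg_power: "cg n S p q \<Longrightarrow> cg n S (p ^ k) (q ^ k)"
  by (induction k) (auto intro: cg_mult cg_refl)

lemma cg_prod: "(\<And>i. i \<in> A \<Longrightarrow> cg n S (f i) (g i)) \<Longrightarrow> cg n S (\<Prod>i\<in>A. f i) (\<Prod>i\<in>A. g i)"
  by (induction A rule: infinite_finite_induct) (auto intro: cg_mult cg_refl)


definition s0 :: "var \<Rightarrow> 'k::field mpoly" where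
  "s0 v = (case v of X i \<Rightarrow> Var (X i) | Y i \<Rightarrow> - Var (X i))"

lemma s0_simps [simp]: "s0 (X i) = xv i" "s0 (Y i) = - xv i"
  by (simp_all add: s0_def)

lemma single_add1: "sg (a + b) (1::'k::field) = sg a 1 * sg b 1"
  by (simp add: mult_single)

lemma single_pow: "sg (sg v k) (1::'k::field) = Var v ^ k"
proof (induction k)
  case 0 then show ?case by simp
next
  case (Suc k)
  have "sg v (Suc k) = sg v 1 + sg v k" by (simp add: single_add[symmetric])
  then show ?case using Suc by (simp add: single_add1 Var_def)
qed

lemma single_sum1: "sg (\<Sum>v\<in>S. f v) (1::'k::field) = (\<Prod>v\<in>S. sg (f v) 1)"
  by (induction S rule: infinite_finite_induct) (auto simp: single_add1)

lemma single_mon: "sg m (1::'k::field) = mon Var m"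
proof -
  have "sg m (1::'k) = sg (\<Sum>v\<in>ks m. sg v (lk m v)) 1"
    using poly_expand[of m] by simp
  also have "\<dots> = mon Var m"
    by (simp add: single_sum1 single_pow mon_def)
  finally show ?thesis .
qed

abbreviation Pg :: "nat \<Rightarrow> 'k::field mpoly set" where
  "Pg n \<equiv> {xv i + yv i | i. 1 \<le> i \<and> i \<le> n}"

lemma cg_Var: "v \<in> varset n \<Longrightarrow> cg n (Pg n) (Var v) (s0 v)"
proof -
  assume v: "v \<in> varset n"
  then obtain i where i: "1 \<le> i" "i \<le> n" "v = X i \<or> v = Y i" by (auto simp: varset_def)
  show ?thesis
  proof (cases "v = X i")
    case True then show ?thesis using i by (simp add: cg_refl polyring_X)
  next
    case False
    then have v': "v = Y i" using i by simp
    have "1 * (xv i + yv i) \<in> ideal_gen n (Pg n :: 'k::field mpoly set)"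
      by (rule ideal_gen_elem) (use i in auto)
    then show ?thesis using v' i
      by (simp add: cg_def polyring_X polyring_Y polyring_uminus add.commute)
  qed
qed

lemma ev_reduce:
  fixes g :: "'k::field mpoly"
  assumes g: "g \<in> polyring n"
  shows "g - ev s0 g \<in> p_plus n"
proof -
  have "g - ev s0 g = (\<Sum>m\<in>ks g. sg 0 (lk g m) * (sg m 1 - mon s0 m))"
  proof -
    have "g = (\<Sum>m\<in>ks g. sg 0 (lk g m) * sg m 1)"
      using poly_expand[of g] by (simp add: mult_single)
    then show ?thesis
      by (simp add: ev_def right_diff_distrib sum_subtractf)
  qed
  also have "\<dots> \<in> p_plus n"
    unfolding p_plus_def
  proof (rule ideal_sum, rule ideal_mult)
    fix m assume m: "m \<in> ks g"
    then have ks: "ks m \<subseteq> varset n" using g by (auto simp: polyring_iff)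
    have "cg n (Pg n) (mon Var m) (mon s0 m :: 'k mpoly)"
      unfolding mon_def
      by (rule cg_prod, rule cg_power, rule cg_Var) (use ks in auto)
    then show "sg m (1::'k) - mon s0 m \<in> ideal_gen n (Pg n)"
      by (simp add: cg_def single_mon)
  qed (rule polyring_const)
  finally show ?thesis .
qed

lemma lookup_mult_single: "lk (p * sg u 1) (k + u) = lk (p :: 'k::field mpoly) k"
proof -
  have "p * sg u 1 = (\<Sum>a\<in>ks p. sg (a+u) (lk p a))"
    by (subst poly_expand[of p]) (simp add: sum_distrib_right mult_single)
  then have "lk (p * sg u 1) (k + u) = (\<Sum>a\<in>ks p. (lk p a when a = k))"
    by (simp add: lookup_sum lookup_single)
  also have "\<dots> = lk (\<Sum>a\<in>ks p. sg a (lk p a)) k"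
    by (simp add: lookup_sum lookup_single)
  also have "\<dots> = lk p k" using poly_expand[of p] by simp
  finally show ?thesis .
qed

lemma mult_Var_zero: "p * Var v = 0 \<Longrightarrow> (p :: 'k::field mpoly) = 0"
proof (rule poly_mapping_eqI)
  fix k assume "p * Var v = 0"
  then have "lk (p * sg (sg v 1) 1) (k + sg v 1) = 0" by (simp add: Var_def)
  then show "lk p k = lk 0 k" by (simp add: lookup_mult_single)
qed


theorem lemma3p5:
  fixes n :: nat
  assumes "n \<ge> 3"
  shows "colon n (ideal_gen n ({xv n + yv n} \<union> I_gens n (n - 2)) :: 'k::field mpoly set) (xv n)
           = p_plus n"
proof -
  let ?G = "{xv n + yv n} \<union> I_gens n (n - 2) :: 'k mpoly set"
  let ?J = "ideal_gen n ?G"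
  have n1: "1 \<le> n" using assms by simp
  have evG: "ev s0 s = 0" if "s \<in> ?G" for s
    using that unfolding I_gens_def
    by (auto simp: gij_def fij_def ev_add ev_diff ev_mult ev_Var mult.commute)
  have Pgpoly: "(Pg n :: 'k mpoly set) \<subseteq> polyring n"
    by (auto intro!: polyring_add polyring_X polyring_Y)
  show ?thesis
  proof
    show "colon n ?J (xv n) \<subseteq> p_plus n"
    proof
      fix g assume "g \<in> colon n ?J (xv n)"
      then have g: "g \<in> polyring n" "g * xv n \<in> ?J" by (simp_all add: colon_def)
      have "ev s0 (g * xv n) = 0" by (rule ev_ideal[OF evG g(2)])
      then have "ev s0 g * xv n = 0" by (simp add: ev_mult ev_Var)
      then have "ev s0 g = 0" by (rule mult_Var_zero)
      then show "g \<in> p_plus n" using ev_reduce[OF g(1)] by simp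
    qed
  next
    show "p_plus n \<subseteq> colon n ?J (xv n)"
    proof
      fix g :: "'k mpoly" assume g: "g \<in> p_plus n"
      have "g \<in> polyring n" using g ideal_subset_polyring[OF Pgpoly] p_plus_def by auto
      moreover have "g * xv n \<in> ?J"
      proof -
        obtain F c where F: "finite F" "F \<subseteq> Pg n" "\<forall>h\<in>F. c h \<in> polyring n" "g = (\<Sum>h\<in>F. c h * h)"
          using g unfolding p_plus_def ideal_gen_def by blast
        have hx: "h * xv n \<in> ?J" if hP: "h \<in> Pg n" for h
        proof -
          obtain i where i: "1 \<le> i" "i \<le> n" "h = xv i + yv i" using hP by auto
          show ?thesis
          proof (cases "i = n")
            case True
            have "xv n * (xv n + yv n) \<in> ?J" by (rule ideal_gen_elem) (auto intro: polyring_X n1)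
            then show ?thesis using True i by (simp add: mult.commute)
          next
            case False
            have "gij i n \<in> I_gens n (n-2)" using i False unfolding I_gens_def by (intro UnI1 CollectI exI[of _ i] exI[of _ n]) auto
            then have "1 * gij i n \<in> ?J" by (intro ideal_gen_elem) auto
            moreover have "yv i * (xv n + yv n) \<in> ?J" by (rule ideal_gen_elem) (auto intro: polyring_Y i)
            ultimately have "1 * gij i n + yv i * (xv n + yv n) \<in> ?J" by (rule ideal_add)
            moreover have "h * xv n = 1 * gij i n + yv i * (xv n + yv n)"
              using i by (simp add: gij_def algebra_simps)
            ultimately show ?thesis by simp
          qed
        qed
        have "g * xv n = (\<Sum>h\<in>F. c h * (h * xv n))" using F(4) by (simp add: sum_distrib_right mult.assoc)
        also have "\<dots> \<in> ?J" using F by (intro ideal_sum ideal_mult hx) auto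
        finally show ?thesis .
      qed
      ultimately show "g \<in> colon n ?J (xv n)" by (simp add: colon_def)
    qed
  qed
qed

end
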